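(* The linear map $\mathrm{STSym}^*\to\mathrm{NCQSym}$ defined by $F_u^*\mapsto Q_{\mathbf w(u)^{-1}}$ is an injective morphism of Hopf algebras.
   Context: A packed word is a word $w=w_1\cdots w_n$ of positive integers whose set of letters is $\{1,\dots,m\}$ for some $m$. For a word $a$ of positive integers, $\mathrm{pack}(a)$ is the unique packed word $b$ of the same length with $b_i<b_j\iff a_i<a_j$. A generalized Stirling permutation (GSP) of degree $n$ is a planar tree (children of each node linearly ordered, each node a leaf or with $\ge2$ children) with $n+1$ leaves, together with a bijection $\kappa$ from its internal nodes to $\{1,\dots,N\}$ ($N$ = number of internal nodes) increasing from each internal node to its internal children. Its word $\mathbf w(u)$: a leaf has empty word; a node $x$ with children $c_1,\dots,c_k$ has word $\mathbf w(c_1)\kappa(x)\mathbf w(c_2)\cdots\kappa(x)\mathbf w(c_k)$. The map $u\mapsto\mathbf w(u)$ is a bijection from GSPs of degree $n$ to the $212$-avoiding packed words of length $n$ (words with no $i<j<k$, $w_i=w_k>w_j$); we identify $u$ with $\mathbf w(u)=u_1\cdots u_n$. $\mathrm{STSym}$ is the Hopf algebra with basis $\{F_u\}$ over GSPs, with product $F_u\cdot F_v=\sum F_w$ over all words $w$ that are shuffles of $u$ and of $v$ with every letter increased by $\max u$, and that are $212$-avoiding; and coproduct $\Delta(F_w)=\sum F_{\mathrm{pack}(w_1\cdots w_i)}\otimes F_{\mathrm{pack}(w_{i+1}\cdots w_n)}$ over $0\le i\le n$ with $\{w_1,\dots,w_i\}\cap\{w_{i+1},\dots,w_n\}=\emptyset$.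 $\mathrm{STSym}^*$ is its graded dual with dual basis $\{F_u^*\}$. $\mathrm{NCQSym}$ is the Hopf algebra with basis $\{Q_{w^{-1}}\}$ indexed by packed words $w$ (here $w^{-1}$ denotes the set composition $(w^{-1}(1),\dots,w^{-1}(m))$, $w^{-1}(a)=\{p:w_p=a\}$), with product $Q_{u^{-1}}Q_{v^{-1}}=\sum Q_{w^{-1}}$ over packed words $w=w_1\cdots w_{n+m}$ ($n=|u|,m=|v|$) with $\mathrm{pack}(w_1\cdots w_n)=u$, $\mathrm{pack}(w_{n+1}\cdots w_{n+m})=v$ and $\{w_1,\dots,w_n\}\cap\{w_{n+1},\dots,w_{n+m}\}=\emptyset$; and coproduct $\Delta(Q_{w^{-1}})=\sum_{i=0}^{\max w}Q_{\mathrm{pack}(w|_{\le i})^{-1}}\otimes Q_{\mathrm{pack}(w|_{>i})^{-1}}$, where $w|_{\le i}$ (resp. $w|_{>i}$) is the subword of $w$ formed by the letters $\le i$ (resp. $>i$). *)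

theory Defs
  imports Main
begin

text \<open>Words of positive integers are lists of naturals; positions are 0-based.\<close>

definition packed :: "nat list \<Rightarrow> bool" where
  "packed w \<longleftrightarrow> (\<exists>m. set w = {1..m})"

definition maxw :: "nat list \<Rightarrow> nat" where
  "maxw w = Max (insert 0 (set w))"

text \<open>pack a: the unique packed word b of the same length with b_i < b_j iff a_i < a_j;
  explicitly, the letter a_i is replaced by its rank among the distinct letters of a.\<close>
definition pack :: "nat list \<Rightarrow> nat list" where
  "pack a = map (\<lambda>x. card {y \<in> set a. y \<le> x}) a"

definition avoids212 :: "nat list \<Rightarrow> bool" where
  "avoids212 w \<longleftrightarrow> \<not> (\<exists>i j k. i < j \<and> j < k \<and> k < length w \<and> w ! i = w ! k \<and> w ! j < w ! i)"

text \<open>GSPs are identified (via the bijection u \<mapsto> w(u)) with 212-avoiding packed words.\<close>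
definition GSP :: "nat list set" where
  "GSP = {w. packed w \<and> avoids212 w}"

text \<open>The word w(u) of a GSP u; under the identification it is u itself.\<close>
definition gsp_word :: "nat list \<Rightarrow> nat list" where
  "gsp_word u = u"

text \<open>STSym: coefficient of F_w in F_u \<cdot> F_v.\<close>
definition st_prod_coeff :: "nat list \<Rightarrow> nat list \<Rightarrow> nat list \<Rightarrow> nat" where
  "st_prod_coeff u v w =
     (if w \<in> shuffles u (map (\<lambda>x. x + maxw u) v) \<and> avoids212 w then 1 else 0)"

text \<open>STSym: coefficient of F_u \<otimes> F_v in \<Delta>(F_w).\<close>
definition st_coprod_coeff :: "nat list \<Rightarrow> nat list \<Rightarrow> nat list \<Rightarrow> nat" where
  "st_coprod_coeff w u v =
     card {i. i \<le> length w \<and> set (take i w) \<inter> set (drop i w) = {}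
              \<and> pack (take i w) = u \<and> pack (drop i w) = v}"

text \<open>NCQSym (basis Q_{w^{-1}} indexed by the packed word w): coefficient of Q_{w^{-1}}
  in Q_{u^{-1}} Q_{v^{-1}}.\<close>
definition nc_prod_coeff :: "nat list \<Rightarrow> nat list \<Rightarrow> nat list \<Rightarrow> nat" where
  "nc_prod_coeff u v w =
     (if packed w \<and> length w = length u + length v
         \<and> pack (take (length u) w) = u \<and> pack (drop (length u) w) = v
         \<and> set (take (length u) w) \<inter> set (drop (length u) w) = {} then 1 else 0)"

text \<open>NCQSym: coefficient of Q_{u^{-1}} \<otimes> Q_{v^{-1}} in \<Delta>(Q_{w^{-1}}).\<close>
definition nc_coprod_coeff :: "nat list \<Rightarrow> nat list \<Rightarrow> nat list \<Rightarrow> nat" where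
  "nc_coprod_coeff w u v =
     card {i. i \<le> maxw w \<and> pack (filter (\<lambda>x. x \<le> i) w) = u
              \<and> pack (filter (\<lambda>x. i < x) w) = v}"

text \<open>An element of a space with basis indexed by words is its coefficient function
  (finitely supported); tensors have coefficient functions on pairs of words.\<close>

definition supp :: "('a \<Rightarrow> 'k::zero) \<Rightarrow> 'a set" where
  "supp f = {x. f x \<noteq> 0}"

definition space :: "'a set \<Rightarrow> ('a \<Rightarrow> 'k::zero) set" where
  "space B = {f. finite (supp f) \<and> supp f \<subseteq> B}"

definition delta :: "'a \<Rightarrow> 'a \<Rightarrow> 'k::{zero,one}" where
  "delta a x = (if x = a then 1 else 0)"

definition mult_sc :: "('a \<Rightarrow> 'a \<Rightarrow> 'a \<Rightarrow> nat) \<Rightarrow> ('a \<Rightarrow> 'k::comm_ring_1) \<Rightarrow> ('a \<Rightarrow> 'k) \<Rightarrow> 'a \<Rightarrow> 'k" where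
  "mult_sc c f g w = (\<Sum>u\<in>supp f. \<Sum>v\<in>supp g. f u * g v * of_nat (c u v w))"

definition comult_sc :: "('a \<Rightarrow> 'a \<Rightarrow> 'a \<Rightarrow> nat) \<Rightarrow> ('a \<Rightarrow> 'k::comm_ring_1) \<Rightarrow> 'a \<times> 'a \<Rightarrow> 'k" where
  "comult_sc d f = (\<lambda>(u, v). \<Sum>w\<in>supp f. f w * of_nat (d w u v))"

definition counit_sc :: "('a \<Rightarrow> 'k::comm_ring_1) \<Rightarrow> ('a \<Rightarrow> 'k) \<Rightarrow> 'k" where
  "counit_sc e f = (\<Sum>w\<in>supp f. f w * e w)"

definition linmap :: "('a \<Rightarrow> 'b) \<Rightarrow> ('a \<Rightarrow> 'k::comm_ring_1) \<Rightarrow> 'b \<Rightarrow> 'k" where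
  "linmap \<sigma> f = (\<lambda>y. \<Sum>x\<in>supp f. if \<sigma> x = y then f x else 0)"

text \<open>In the dual basis F_u^*, the product is the transpose of the coproduct of STSym,
  the coproduct is the transpose of the product of STSym, the unit is F_{[]}^*
  (transpose of the counit \<epsilon>(F_w) = [w = []]) and the counit is the transpose of the
  unit F_{[]} of STSym.\<close>

definition STdual_space :: "(nat list \<Rightarrow> 'k::comm_ring_1) set" where
  "STdual_space = space GSP"

definition STdual_mult :: "(nat list \<Rightarrow> 'k::comm_ring_1) \<Rightarrow> (nat list \<Rightarrow> 'k) \<Rightarrow> nat list \<Rightarrow> 'k" where
  "STdual_mult = mult_sc (\<lambda>u v w. if u \<in> GSP \<and> v \<in> GSP \<and> w \<in> GSP then st_coprod_coeff w u v else 0)"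

definition STdual_comult :: "(nat list \<Rightarrow> 'k::comm_ring_1) \<Rightarrow> nat list \<times> nat list \<Rightarrow> 'k" where
  "STdual_comult = comult_sc (\<lambda>w u v. if u \<in> GSP \<and> v \<in> GSP \<and> w \<in> GSP then st_prod_coeff u v w else 0)"

definition STdual_unit :: "nat list \<Rightarrow> 'k::comm_ring_1" where
  "STdual_unit = delta []"

definition STdual_counit :: "(nat list \<Rightarrow> 'k::comm_ring_1) \<Rightarrow> 'k" where
  "STdual_counit = counit_sc (delta [])"

definition NCQ_space :: "(nat list \<Rightarrow> 'k::comm_ring_1) set" where
  "NCQ_space = space {w. packed w}"

definition NCQ_mult :: "(nat list \<Rightarrow> 'k::comm_ring_1) \<Rightarrow> (nat list \<Rightarrow> 'k) \<Rightarrow> nat list \<Rightarrow> 'k" where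
  "NCQ_mult = mult_sc (\<lambda>u v w. if packed u \<and> packed v \<and> packed w then nc_prod_coeff u v w else 0)"

definition NCQ_comult :: "(nat list \<Rightarrow> 'k::comm_ring_1) \<Rightarrow> nat list \<times> nat list \<Rightarrow> 'k" where
  "NCQ_comult = comult_sc (\<lambda>w u v. if packed u \<and> packed v \<and> packed w then nc_coprod_coeff w u v else 0)"

definition NCQ_unit :: "nat list \<Rightarrow> 'k::comm_ring_1" where
  "NCQ_unit = delta []"

definition NCQ_counit :: "(nat list \<Rightarrow> 'k::comm_ring_1) \<Rightarrow> 'k" where
  "NCQ_counit = counit_sc (delta [])"

text \<open>The map F_u^* \<mapsto> Q_{w(u)^{-1}}, and its tensor square.\<close>
definition Phi :: "(nat list \<Rightarrow> 'k::comm_ring_1) \<Rightarrow> nat list \<Rightarrow> 'k" where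
  "Phi = linmap gsp_word"

definition Phi2 :: "(nat list \<times> nat list \<Rightarrow> 'k::comm_ring_1) \<Rightarrow> nat list \<times> nat list \<Rightarrow> 'k" where
  "Phi2 = linmap (map_prod gsp_word gsp_word)"

end

theory Submission imports Defs "HOL-Library.Sublist" begin

definition pat3 :: "nat list \<Rightarrow> bool" where
  "pat3 w \<longleftrightarrow> (\<exists>a b. b < a \<and> subseq [a,b,a] w)"

lemma subseq3_dec:
  "subseq [a,b,c] w \<longleftrightarrow> (\<exists>p q r s. w = p @ a # q @ b # r @ c # s)"
proof
  assume "subseq [a,b,c] w"
  then obtain p v1 w1 where 1: "w = p @ v1 # w1" "a = v1" "subseq [b,c] w1"
    using list_emb_ConsD by fastforce
  then obtain q v2 w2 where 2: "w1 = q @ v2 # w2" "b = v2" "subseq [c] w2"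
    using list_emb_ConsD by fastforce
  then obtain r v3 s where 3: "w2 = r @ v3 # s" "c = v3"
    using list_emb_ConsD by fastforce
  show "\<exists>p q r s. w = p @ a # q @ b # r @ c # s" using 1 2 3 by blast
next
  assume "\<exists>p q r s. w = p @ a # q @ b # r @ c # s"
  then obtain p q r s where "w = p @ a # q @ b # r @ c # s" by blast
  have "subseq [c] (r @ c # s)" by (rule list_emb_append2) simp
  then have "subseq [b,c] (b # r @ c # s)" by (rule list_emb_Cons2[rotated]) simp
  then have "subseq [b,c] (q @ b # r @ c # s)" by (rule list_emb_append2)
  then have "subseq [a,b,c] (a # q @ b # r @ c # s)" by (rule list_emb_Cons2[rotated]) simp
  then show "subseq [a,b,c] w" using \<open>w = _\<close> by (simp add: list_emb_append2)
qed

lemma idx_dec: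
  assumes "i < j" "j < k" "k < length w"
  shows "\<exists>p q r s. w = p @ w!i # q @ w!j # r @ w!k # s"
proof -
  have w1: "w = take i w @ w!i # drop (Suc i) w" using assms by (simp add: id_take_nth_drop)
  define w1 where "w1 = drop (Suc i) w"
  have j1: "j - Suc i < length w1" "w1 ! (j - Suc i) = w ! j" using assms by (auto simp: w1_def)
  have w2: "w1 = take (j - Suc i) w1 @ w!j # drop (Suc (j - Suc i)) w1"
    using j1 by (metis id_take_nth_drop)
  define w2 where "w2 = drop (Suc (j - Suc i)) w1"
  have k1: "k - Suc j < length w2" "w2 ! (k - Suc j) = w ! k" using assms
    by (auto simp: w2_def w1_def)
  have w3: "w2 = take (k - Suc j) w2 @ w!k # drop (Suc (k - Suc j)) w2"
    using k1 by (metis id_take_nth_drop)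
  show ?thesis
    by (metis w1 w1_def w2 w2_def w3)
qed

lemma avoids_pat: "avoids212 w \<longleftrightarrow> \<not> pat3 w"
proof
  assume A: "avoids212 w"
  show "\<not> pat3 w"
  proof
    assume "pat3 w"
    then obtain a b p q r s where "b < a" "w = p @ a # q @ b # r @ a # s"
      unfolding pat3_def subseq3_dec by blast
    moreover define i j k where "i = length p" "j = length p + Suc (length q)"
        "k = length p + Suc (length q) + Suc (length r)"
    ultimately have "i < j \<and> j < k \<and> k < length w \<and> w ! i = w ! k \<and> w ! j < w ! i"
      by (simp add: nth_append)
    with A show False unfolding avoids212_def by blast
  qed
next
  assume "\<not> pat3 w"
  show "avoids212 w" unfolding avoids212_def
  proof (intro notI, elim exE conjE)
    fix i j k assume h: "i < j" "j < k" "k < length w" "w ! i = w ! k" "w ! j < w ! i"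
    obtain p q r s where "w = p @ w!i # q @ w!j # r @ w!k # s" using idx_dec[OF h(1-3)] by blast
    then have "subseq [w!i, w!j, w!i] w" unfolding subseq3_dec using h(4) by metis
    then show False using \<open>\<not> pat3 w\<close> h(5) unfolding pat3_def by blast
  qed
qed

lemma subseq_set: "subseq xs ys \<Longrightarrow> set xs \<subseteq> set ys"
  by (induct rule: list_emb.induct) auto

lemma pat3_filter: "pat3 (filter P w) \<Longrightarrow> pat3 w"
  unfolding pat3_def using subseq_filter_left subseq_order.order_trans by blast

lemma pat3_append: "pat3 (x @ y) \<Longrightarrow> set x \<inter> set y = {} \<Longrightarrow> pat3 x \<or> pat3 y"
proof -
  assume "pat3 (x @ y)" "set x \<inter> set y = {}"
  then obtain a b where ab: "b < a" "subseq [a,b,a] (x @ y)" unfolding pat3_def by blast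
  then obtain l1 l2 where l: "[a,b,a] = l1 @ l2" "subseq l1 x" "subseq l2 y"
    using subseq_appendE[OF ab(2)] by blast
  have sx: "set l1 \<subseteq> set x" using l(2) by (rule subseq_set)
  have sy: "set l2 \<subseteq> set y" using l(3) by (rule subseq_set)
  show ?thesis
  proof (cases l1)
    case Nil then show ?thesis using l ab unfolding pat3_def by auto
  next
    case (Cons c l1')
    show ?thesis
    proof (cases l1')
      case Nil then have "a \<in> set x" "a \<in> set y" using l Cons sx sy by auto
      then show ?thesis using \<open>set x \<inter> set y = {}\<close> by blast
    next
      case (Cons d l1'')
      show ?thesis
      proof (cases l1'')
        case Nil then have "a \<in> set x" "a \<in> set y" using l Cons \<open>l1 = c # l1'\<close> sx sy by auto
        then show ?thesis using \<open>set x \<inter> set y = {}\<close> by blast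
      next
        case (Cons e l3)
        then have "l1 = [a,b,a]" using l \<open>l1 = c # l1'\<close> \<open>l1' = d # l1''\<close> by auto
        then show ?thesis using l ab unfolding pat3_def by auto
      qed
    qed
  qed
qed

lemma pack_mono:
  fixes x :: "nat list"
  assumes "a \<in> set x" "b \<in> set x" "b < a"
  shows "card {y \<in> set x. y \<le> b} < card {y \<in> set x. y \<le> a}"
proof (rule psubset_card_mono)
  show "{y \<in> set x. y \<le> b} \<subset> {y \<in> set x. y \<le> a}"
  proof
    show "{y \<in> set x. y \<le> b} \<subseteq> {y \<in> set x. y \<le> a}" using assms by auto
    have "a \<in> {y \<in> set x. y \<le> a}" "a \<notin> {y \<in> set x. y \<le> b}" using assms by auto
    then show "{y \<in> set x. y \<le> b} \<noteq> {y \<in> set x. y \<le> a}" by blast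
  qed
qed auto

lemma map_dec:
  assumes "map g x = p @ a # q @ b # r @ c # s"
  shows "\<exists>p' a1 q' b1 r' c1 s'. x = p' @ a1 # q' @ b1 # r' @ c1 # s' \<and> g a1 = a \<and> g b1 = b \<and> g c1 = c"
proof -
  obtain p' x1 where 1: "x = p' @ x1" "map g x1 = a # q @ b # r @ c # s"
    using assms by (auto simp: map_eq_append_conv)
  obtain a1 x2 where 2: "x1 = a1 # x2" "g a1 = a" "map g x2 = q @ b # r @ c # s"
    using 1(2) by (auto simp: map_eq_Cons_conv)
  obtain q' x3 where 3: "x2 = q' @ x3" "map g x3 = b # r @ c # s"
    using 2(3) by (auto simp: map_eq_append_conv)
  obtain b1 x4 where 4: "x3 = b1 # x4" "g b1 = b" "map g x4 = r @ c # s"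
    using 3(2) by (auto simp: map_eq_Cons_conv)
  obtain r' x5 where 5: "x4 = r' @ x5" "map g x5 = c # s"
    using 4(3) by (auto simp: map_eq_append_conv)
  obtain c1 s' where 6: "x5 = c1 # s'" "g c1 = c"
    using 5(2) by (auto simp: map_eq_Cons_conv)
  show ?thesis using 1 2 3 4 5 6 by blast
qed

lemma pat3_pack: "pat3 (pack x) \<longleftrightarrow> pat3 x"
proof -
  define g where "g = (\<lambda>y. card {z \<in> set x. z \<le> y})"
  have pk: "pack x = map g x" unfolding pack_def g_def by simp
  have mono: "\<And>a b. a \<in> set x \<Longrightarrow> b \<in> set x \<Longrightarrow> b < a \<Longrightarrow> g b < g a"
    unfolding g_def by (rule pack_mono)
  have injg: "\<And>a b. a \<in> set x \<Longrightarrow> b \<in> set x \<Longrightarrow> g a = g b \<Longrightarrow> a = b"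
  proof (rule ccontr)
    fix a b assume h: "a \<in> set x" "b \<in> set x" "g a = g b" "a \<noteq> b"
    then have "a < b \<or> b < a" by linarith
    then show False using mono[OF h(1,2)] mono[OF h(2,1)] h(3) by auto
  qed
  show ?thesis
  proof
    assume "pat3 (pack x)"
    then obtain a b p q r s where ab: "b < a" "map g x = p @ a # q @ b # r @ a # s"
      unfolding pat3_def subseq3_dec pk by blast
    then obtain p' a1 q' b1 r' a2 s' where d: "x = p' @ a1 # q' @ b1 # r' @ a2 # s'"
      "g a1 = a" "g b1 = b" "g a2 = a"
      using map_dec[OF ab(2)] by blast
    have "a1 \<in> set x" "b1 \<in> set x" "a2 \<in> set x" using d(1) by auto
    then have e: "a1 = a2" using injg[of a1 a2] d by argo
    have "b1 < a1"
    proof (rule ccontr)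
      assume "\<not> b1 < a1"
      then have "a1 = b1 \<or> a1 < b1" by linarith
      then show False
      proof
        assume "a1 = b1" then show False using d ab(1) by simp
      next
        assume "a1 < b1" then have "g a1 < g b1" using mono \<open>a1 \<in> set x\<close> \<open>b1 \<in> set x\<close> by blast
        then show False using d ab(1) by simp
      qed
    qed
    note e this
    then show "pat3 x" unfolding pat3_def subseq3_dec using d(1) by blast
  next
    assume "pat3 x"
    then obtain a b where ab: "b < a" "subseq [a,b,a] x" unfolding pat3_def by blast
    have "a \<in> set x" "b \<in> set x" using ab(2) unfolding subseq3_dec by auto
    then have "g b < g a" using mono ab by blast
    moreover have "subseq [g a, g b, g a] (map g x)" using subseq_map[OF ab(2)] by simp
    ultimately show "pat3 (pack x)" unfolding pat3_def pk by blast
  qed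
qed


lemma length_pack[simp]: "length (pack x) = length x"
  by (simp add: pack_def)

lemma maxw_ge: "x \<in> set w \<Longrightarrow> x \<le> maxw w"
  unfolding maxw_def by (simp add: Max_ge)

lemma maxw_set: "set w = {1..m} \<Longrightarrow> maxw w = m"
  unfolding maxw_def
proof -
  assume "set w = {1..m}"
  then have "insert 0 (set w) = {0..m}" by auto
  then show "Max (insert 0 (set w)) = m" by (simp, intro Max_eqI) auto
qed

lemma packed_set: "packed w \<Longrightarrow> set w = {1..maxw w}"
  unfolding packed_def using maxw_set by blast

lemma pack_shift:
  assumes "set x = {Suc k..m}"
  shows "pack x = map (\<lambda>y. y - k) x"
  unfolding pack_def
proof (rule map_cong[OF refl])
  fix y assume "y \<in> set x"
  then have "y \<in> {Suc k..m}" using assms by simp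
  then have "{z \<in> set x. z \<le> y} = {Suc k..y}" using assms by auto
  then show "card {z \<in> set x. z \<le> y} = y - k" by simp
qed

lemma pack_packed: "packed x \<Longrightarrow> pack x = x"
  using pack_shift[of x 0 "maxw x"] packed_set[of x] by simp

lemma packed_length: "packed w \<Longrightarrow> set w \<subseteq> {0..length w}"
proof -
  assume "packed w"
  then have s: "set w = {1..maxw w}" by (rule packed_set)
  have "maxw w = card (set w)" using s by simp
  also have "\<dots> \<le> length w" by (rule card_length)
  finally show ?thesis using s by auto
qed

lemma finite_packed: "finite {w. packed w \<and> length w \<le> L}"
proof (rule finite_subset)
  show "{w. packed w \<and> length w \<le> L} \<subseteq> {xs. set xs \<subseteq> {0..L} \<and> length xs \<le> L}"
    using packed_length by fastforce
  show "finite {xs. set xs \<subseteq> {0..L::nat} \<and> length xs \<le> L}"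
    by (rule finite_lists_length_le) simp
qed

lemma comult_core:
  assumes pw: "packed w" and pu: "packed u" and pv: "packed v"
  shows "{i. i \<le> maxw w \<and> pack (filter (\<lambda>x. x \<le> i) w) = u \<and> pack (filter (\<lambda>x. i < x) w) = v}
       = (if w \<in> shuffles u (map (\<lambda>x. x + maxw u) v) then {maxw u} else {})"
proof -
  have sw: "set w = {1..maxw w}" using pw by (rule packed_set)
  have su: "set u = {1..maxw u}" using pu by (rule packed_set)
  have sv: "set v = {1..maxw v}" using pv by (rule packed_set)
  have fwd: "i = maxw u \<and> w \<in> shuffles u (map (\<lambda>x. x + maxw u) v)"
    if h: "i \<le> maxw w" "pack (filter (\<lambda>x. x \<le> i) w) = u" "pack (filter (\<lambda>x. i < x) w) = v" for i
  proof -
    have s1: "set (filter (\<lambda>x. x \<le> i) w) = {1..i}" using sw h(1) by auto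
    have s2: "set (filter (\<lambda>x. i < x) w) = {Suc i..maxw w}" using sw h(1) by auto
    have u: "u = filter (\<lambda>x. x \<le> i) w"
      using h(2) pack_shift[OF s1[unfolded One_nat_def]] by simp
    have mu: "maxw u = i" using maxw_set s1 u by simp
    have v: "v = map (\<lambda>y. y - i) (filter (\<lambda>x. i < x) w)"
      using h(3) pack_shift[OF s2] by simp
    have v': "map (\<lambda>x. x + i) v = filter (\<lambda>x. i < x) w"
      unfolding v by (induct w) auto
    have "w \<in> shuffles (filter (\<lambda>x. x \<le> i) w) (filter (\<lambda>x. \<not> x \<le> i) w)"
      by (rule partition_in_shuffles)
    moreover have "filter (\<lambda>x. \<not> x \<le> i) w = filter (\<lambda>x. i < x) w"
      by (simp add: not_le)
    ultimately show ?thesis using u v' mu by simp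
  qed
  have bwd: "maxw u \<le> maxw w \<and> pack (filter (\<lambda>x. x \<le> maxw u) w) = u
          \<and> pack (filter (\<lambda>x. maxw u < x) w) = v"
    if sh: "w \<in> shuffles u (map (\<lambda>x. x + maxw u) v)"
  proof -
    define i where "i = maxw u"
    define v' where "v' = map (\<lambda>x. x + i) v"
    have sv': "set v' = {Suc i..maxw v + i}" unfolding v'_def using sv
      by (auto simp: image_iff intro!: bexI[where x="_ - i"])
    have disj: "set u \<inter> set v' = {}" using su sv' unfolding i_def by auto
    have sh': "w \<in> shuffles u v'" using sh unfolding v'_def i_def .
    have swu: "set w = set u \<union> set v'" using set_shuffles[OF sh'] .
    have f1: "filter (\<lambda>x. x \<le> i) w = u"
    proof -
      have "filter (\<lambda>x. x \<le> i) w = filter (\<lambda>x. x \<in> set u) w"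
        by (rule filter_cong[OF refl]) (use swu su sv' i_def in auto)
      then show ?thesis using filter_shuffles_disjoint1(1)[OF disj sh'] by simp
    qed
    have f2: "filter (\<lambda>x. i < x) w = v'"
    proof -
      have "filter (\<lambda>x. i < x) w = filter (\<lambda>x. x \<notin> set u) w"
        by (rule filter_cong[OF refl]) (use swu su sv' i_def in auto)
      then show ?thesis using filter_shuffles_disjoint1(2)[OF disj sh'] by simp
    qed
    have "i \<le> maxw w"
    proof (cases "u = []")
      case True then show ?thesis unfolding i_def maxw_def by simp
    next
      case False
      then have "i \<in> set u" using su i_def by (cases "maxw u") (auto simp: neq_Nil_conv)
      then show ?thesis using swu maxw_ge by blast
    qed
    moreover have "pack u = u" using pu by (rule pack_packed)
    moreover have "pack v' = v"
      using pack_shift[OF sv'] unfolding v'_def by (simp add: map_idI)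
    ultimately show ?thesis using f1 f2 i_def by simp
  qed
  show ?thesis
  proof (cases "w \<in> shuffles u (map (\<lambda>x. x + maxw u) v)")
    case True
    then show ?thesis using fwd bwd[OF True] by auto
  next
    case False
    then show ?thesis using fwd by auto
  qed
qed


lemma GSP_packed: "w \<in> GSP \<Longrightarrow> packed w"
  unfolding GSP_def by simp

lemma GSP_iff: "w \<in> GSP \<longleftrightarrow> packed w \<and> \<not> pat3 w"
  unfolding GSP_def by (simp add: avoids_pat)

lemma mult_core:
  assumes u: "u \<in> GSP" and v: "v \<in> GSP"
  shows "(if u \<in> GSP \<and> v \<in> GSP \<and> w \<in> GSP then st_coprod_coeff w u v else 0)
       = (if packed u \<and> packed v \<and> packed w then nc_prod_coeff u v w else 0)"
proof -
  define n where "n = length u"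
  define cond where "cond = (length w = length u + length v \<and> pack (take n w) = u
      \<and> pack (drop n w) = v \<and> set (take n w) \<inter> set (drop n w) = {})"
  define P where "P i = (i \<le> length w \<and> set (take i w) \<inter> set (drop i w) = {}
              \<and> pack (take i w) = u \<and> pack (drop i w) = v)" for i
  have key: "i = n \<and> cond" if "P i" for i
  proof -
    have h: "i \<le> length w" "set (take i w) \<inter> set (drop i w) = {}"
              "pack (take i w) = u" "pack (drop i w) = v" using that unfolding P_def by auto
    have "length (pack (take i w)) = i" using h(1) by simp
    then have li: "length u = i" using h(3) by simp
    have "length (pack (drop i w)) = length w - i" by simp
    then have lv: "length v = length w - i" using h(4) by simp
    have i: "i = n" using li n_def by simp
    have "length w = length u + length v" using li lv h(1) by simp
    then show ?thesis unfolding cond_def using i h by simp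
  qed
  have Pn: "P n" if cond
  proof -
    have c: "length w = length u + length v" "pack (take n w) = u"
      "pack (drop n w) = v" "set (take n w) \<inter> set (drop n w) = {}"
      using that unfolding cond_def by blast+
    have "n \<le> length w" using c(1) n_def by linarith
    then show ?thesis unfolding P_def using c(2,3,4) by blast
  qed
  have S: "{i. P i} = (if cond then {n} else {})"
  proof (cases cond)
    case True
    have "{i. P i} = {n}"
    proof (rule set_eqI)
      fix i show "i \<in> {i. P i} \<longleftrightarrow> i \<in> {n}"
      proof
        assume "i \<in> {i. P i}"
        then have "P i" by simp
        then have "i = n" using key by blast
        then show "i \<in> {n}" by simp
      next
        assume "i \<in> {n}"
        then have "i = n" by simp
        then show "i \<in> {i. P i}" using Pn[OF True] by simp
      qed
    qed
    then show ?thesis using True by simp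
  next
    case False
    have "{i. P i} = {}"
    proof (rule set_eqI)
      fix i show "i \<in> {i. P i} \<longleftrightarrow> i \<in> {}"
      proof
        assume "i \<in> {i. P i}"
        then have "P i" by simp
        then have "cond" using key by blast
        then show "i \<in> {}" using False by simp
      qed simp
    qed
    then show ?thesis using False by simp
  qed
  have st: "st_coprod_coeff w u v = (if cond then 1 else 0)"
  proof -
    have "st_coprod_coeff w u v = card {i. P i}" unfolding st_coprod_coeff_def P_def by simp
    then show ?thesis unfolding S by simp
  qed
  have nc: "nc_prod_coeff u v w = (if packed w \<and> cond then 1 else 0)"
    unfolding nc_prod_coeff_def cond_def n_def by auto
  have av: "\<not> pat3 w" if cond
  proof
    assume "pat3 w"
    then have "pat3 (take n w @ drop n w)" by simp
    then have "pat3 (take n w) \<or> pat3 (drop n w)"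
      using pat3_append \<open>cond\<close> unfolding cond_def by blast
    then have "pat3 (pack (take n w)) \<or> pat3 (pack (drop n w))" by (simp add: pat3_pack)
    then have "pat3 u \<or> pat3 v" using \<open>cond\<close> unfolding cond_def by simp
    then show False using u v GSP_iff by blast
  qed
  have pu: "packed u" "packed v" using u v GSP_packed by blast+
  show ?thesis
  proof (cases "packed w \<and> cond")
    case True
    then have "w \<in> GSP" using av GSP_iff by blast
    then show ?thesis using True u v pu unfolding st nc by simp
  next
    case False
    then show ?thesis using u v pu GSP_packed unfolding st nc by auto
  qed
qed

lemma comult_lemma:
  assumes w: "w \<in> GSP"
  shows "(if packed u \<and> packed v \<and> packed w then nc_coprod_coeff w u v else 0)
       = (if u \<in> GSP \<and> v \<in> GSP \<and> w \<in> GSP then st_prod_coeff u v w else 0)"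
proof (cases "packed u \<and> packed v")
  case False
  then show ?thesis using GSP_packed by auto
next
  case True
  define sh where "sh = (w \<in> shuffles u (map (\<lambda>x. x + maxw u) v))"
  have pw: "packed w" using w GSP_packed by blast
  have core: "{i. i \<le> maxw w \<and> pack (filter (\<lambda>x. x \<le> i) w) = u \<and> pack (filter (\<lambda>x. i < x) w) = v}
       = (if sh then {maxw u} else {})"
    using comult_core[OF pw] True unfolding sh_def by blast
  have nc: "nc_coprod_coeff w u v = (if sh then 1 else 0)"
    unfolding nc_coprod_coeff_def core by simp
  have st: "st_prod_coeff u v w = (if sh then 1 else 0)"
    unfolding st_prod_coeff_def sh_def using w unfolding GSP_def by simp
  have g: "u \<in> GSP \<and> v \<in> GSP" if sh
  proof -
    have "maxw u \<in> {i. i \<le> maxw w \<and> pack (filter (\<lambda>x. x \<le> i) w) = u \<and> pack (filter (\<lambda>x. i < x) w) = v}"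
      using core \<open>sh\<close> by simp
    then have e: "pack (filter (\<lambda>x. x \<le> maxw u) w) = u" "pack (filter (\<lambda>x. maxw u < x) w) = v"
      by auto
    have np: "\<not> pat3 w" using w GSP_iff by blast
    have "\<not> pat3 (filter (\<lambda>x. x \<le> maxw u) w)" "\<not> pat3 (filter (\<lambda>x. maxw u < x) w)"
      using np pat3_filter by blast+
    then have "\<not> pat3 (pack (filter (\<lambda>x. x \<le> maxw u) w))" "\<not> pat3 (pack (filter (\<lambda>x. maxw u < x) w))"
      by (simp_all add: pat3_pack)
    then have "\<not> pat3 u" "\<not> pat3 v" using e by simp_all
    then show ?thesis using True GSP_iff by blast
  qed
  show ?thesis using True pw w nc st g by auto
qed


lemma Phi_id: "finite (supp f) \<Longrightarrow> Phi f = f"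
proof (rule ext)
  fix y assume fin: "finite (supp f)"
  have "Phi f y = (\<Sum>x\<in>supp f. if x = y then f x else 0)"
    unfolding Phi_def linmap_def gsp_word_def by simp
  also have "\<dots> = (if y \<in> supp f then f y else 0)" using fin by simp
  also have "\<dots> = f y" unfolding supp_def by simp
  finally show "Phi f y = f y" .
qed

lemma Phi2_id: "finite (supp f) \<Longrightarrow> Phi2 f = f"
proof (rule ext)
  fix y assume fin: "finite (supp f)"
  have "Phi2 f y = (\<Sum>x\<in>supp f. if x = y then f x else 0)"
    unfolding Phi2_def linmap_def gsp_word_def by (simp add: prod.map_ident)
  also have "\<dots> = (if y \<in> supp f then f y else 0)" using fin by simp
  also have "\<dots> = f y" unfolding supp_def by simp
  finally show "Phi2 f y = f y" .
qed

lemma spaceD: "f \<in> space B \<Longrightarrow> finite (supp f) \<and> supp f \<subseteq> B"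
  unfolding space_def by simp

lemma mult_eq:
  fixes f g :: "nat list \<Rightarrow> 'k::comm_ring_1"
  assumes f: "f \<in> space GSP" and g: "g \<in> space GSP"
  shows "STdual_mult f g = NCQ_mult f g"
proof (rule ext)
  fix w
  show "STdual_mult f g w = NCQ_mult f g w"
    unfolding STdual_mult_def NCQ_mult_def mult_sc_def
  proof (rule sum.cong[OF refl], rule sum.cong[OF refl])
    fix u v assume u: "u \<in> supp f" and v: "v \<in> supp g"
    have uG: "u \<in> GSP" using u spaceD[OF f] by blast
    have vG: "v \<in> GSP" using v spaceD[OF g] by blast
    show "f u * g v * of_nat (if u \<in> GSP \<and> v \<in> GSP \<and> w \<in> GSP then st_coprod_coeff w u v else 0)
        = f u * g v * of_nat (if packed u \<and> packed v \<and> packed w then nc_prod_coeff u v w else 0)"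
      using mult_core[OF uG vG, of w] by simp
  qed
qed

lemma mult_fin:
  fixes f g :: "nat list \<Rightarrow> 'k::comm_ring_1"
  assumes f: "f \<in> space GSP" and g: "g \<in> space GSP"
  shows "finite (supp (STdual_mult f g))"
proof -
  define L where "L = Max (length ` supp f) + Max (length ` supp g)"
  have ff: "finite (supp f)" "finite (supp g)" using spaceD[OF f] spaceD[OF g] by blast+
  have "supp (STdual_mult f g) \<subseteq> {w. packed w \<and> length w \<le> L}"
  proof
    fix w assume "w \<in> supp (STdual_mult f g)"
    then have "NCQ_mult f g w \<noteq> 0" unfolding supp_def mult_eq[OF f g] by simp
    then have "(\<Sum>u\<in>supp f. \<Sum>v\<in>supp g. f u * g v *
        of_nat (if packed u \<and> packed v \<and> packed w then nc_prod_coeff u v w else 0)) \<noteq> (0::'k)"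
      unfolding NCQ_mult_def mult_sc_def by simp
    then obtain u where u: "u \<in> supp f" and
      s: "(\<Sum>v\<in>supp g. f u * g v *
        of_nat (if packed u \<and> packed v \<and> packed w then nc_prod_coeff u v w else 0)) \<noteq> (0::'k)"
      by (meson sum.not_neutral_contains_not_neutral)
    then obtain v where v: "v \<in> supp g" and
      t: "f u * g v * of_nat (if packed u \<and> packed v \<and> packed w then nc_prod_coeff u v w else 0) \<noteq> (0::'k)"
      by (meson sum.not_neutral_contains_not_neutral)
    have "packed w \<and> nc_prod_coeff u v w \<noteq> 0"
    proof (rule ccontr)
      assume "\<not> (packed w \<and> nc_prod_coeff u v w \<noteq> 0)"
      then have "(if packed u \<and> packed v \<and> packed w then nc_prod_coeff u v w else 0) = 0" by auto
      then show False using t by simp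
    qed
    then have pw: "packed w" and lw: "length w = length u + length v"
      unfolding nc_prod_coeff_def by (auto split: if_splits)
    have "length u \<le> Max (length ` supp f)" using u ff by simp
    moreover have "length v \<le> Max (length ` supp g)" using v ff by simp
    ultimately show "w \<in> {w. packed w \<and> length w \<le> L}" using pw lw L_def by simp
  qed
  then show ?thesis using finite_packed finite_subset by blast
qed

lemma comult_eq:
  fixes f :: "nat list \<Rightarrow> 'k::comm_ring_1"
  assumes f: "f \<in> space GSP"
  shows "NCQ_comult f = STdual_comult f"
proof (rule ext)
  fix p :: "nat list \<times> nat list"
  obtain u v where p: "p = (u, v)" by (cases p)
  show "NCQ_comult f p = STdual_comult f p"
    unfolding NCQ_comult_def STdual_comult_def comult_sc_def p prod.case
  proof (rule sum.cong[OF refl])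
    fix w assume w: "w \<in> supp f"
    have wG: "w \<in> GSP" using w spaceD[OF f] by blast
    show "f w * of_nat (if packed u \<and> packed v \<and> packed w then nc_coprod_coeff w u v else 0)
        = f w * of_nat (if u \<in> GSP \<and> v \<in> GSP \<and> w \<in> GSP then st_prod_coeff u v w else 0)"
      using comult_lemma[OF wG, of u v] by simp
  qed
qed

lemma comult_fin:
  fixes f :: "nat list \<Rightarrow> 'k::comm_ring_1"
  assumes f: "f \<in> space GSP"
  shows "finite (supp (STdual_comult f))"
proof -
  define L where "L = Max (length ` supp f)"
  define S where "S = {w. packed w \<and> length w \<le> L}"
  have ff: "finite (supp f)" using spaceD[OF f] by blast
  have "supp (STdual_comult f) \<subseteq> S \<times> S"
  proof
    fix p assume "p \<in> supp (STdual_comult f)"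
    obtain u v where p: "p = (u, v)" by (cases p)
    have "(\<Sum>w\<in>supp f. f w *
        of_nat (if u \<in> GSP \<and> v \<in> GSP \<and> w \<in> GSP then st_prod_coeff u v w else 0)) \<noteq> (0::'k)"
      using \<open>p \<in> supp _\<close> unfolding supp_def STdual_comult_def comult_sc_def p by simp
    then obtain w where w: "w \<in> supp f" and
      t: "f w * of_nat (if u \<in> GSP \<and> v \<in> GSP \<and> w \<in> GSP then st_prod_coeff u v w else 0) \<noteq> (0::'k)"
      by (meson sum.not_neutral_contains_not_neutral)
    have "u \<in> GSP \<and> v \<in> GSP \<and> st_prod_coeff u v w \<noteq> 0"
    proof (rule ccontr)
      assume "\<not> (u \<in> GSP \<and> v \<in> GSP \<and> st_prod_coeff u v w \<noteq> 0)"
      then have "(if u \<in> GSP \<and> v \<in> GSP \<and> w \<in> GSP then st_prod_coeff u v w else 0) = 0" by auto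
      then show False using t by simp
    qed
    then have uv: "packed u" "packed v" and sh: "w \<in> shuffles u (map (\<lambda>x. x + maxw u) v)"
      using GSP_packed unfolding st_prod_coeff_def by (auto split: if_splits)
    have "length w = length u + length v" using length_shuffles[OF sh] by simp
    moreover have "length w \<le> L" using w ff L_def by simp
    ultimately show "p \<in> S \<times> S" using uv p S_def by simp
  qed
  moreover have "finite (S \<times> S)" using finite_packed S_def by simp
  ultimately show ?thesis using finite_subset by blast
qed

theorem mainTheorem5:
  shows "Phi ` (STdual_space :: (nat list \<Rightarrow> 'k::field) set) \<subseteq> NCQ_space
    \<and> inj_on (Phi :: (nat list \<Rightarrow> 'k) \<Rightarrow> _) STdual_space
    \<and> (\<forall>f \<in> (STdual_space :: (nat list \<Rightarrow> 'k) set). \<forall>g \<in> STdual_space.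
           Phi (STdual_mult f g) = NCQ_mult (Phi f) (Phi g))
    \<and> Phi (STdual_unit :: nat list \<Rightarrow> 'k) = NCQ_unit
    \<and> (\<forall>f \<in> (STdual_space :: (nat list \<Rightarrow> 'k) set).
           NCQ_comult (Phi f) = Phi2 (STdual_comult f))
    \<and> (\<forall>f \<in> (STdual_space :: (nat list \<Rightarrow> 'k) set).
           NCQ_counit (Phi f) = STdual_counit f)"
proof (intro conjI ballI)
  have PhiS: "Phi f = f" if "f \<in> (STdual_space :: (nat list \<Rightarrow> 'k) set)" for f :: "nat list \<Rightarrow> 'k"
    using that spaceD Phi_id unfolding STdual_space_def by blast
  show "Phi ` (STdual_space :: (nat list \<Rightarrow> 'k) set) \<subseteq> NCQ_space"
  proof
    fix h assume "h \<in> Phi ` (STdual_space :: (nat list \<Rightarrow> 'k) set)"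
    then obtain f where f: "f \<in> (STdual_space :: (nat list \<Rightarrow> 'k) set)" "h = Phi f" by blast
    have "finite (supp f)" "supp f \<subseteq> GSP" using f(1) spaceD unfolding STdual_space_def by blast+
    then show "h \<in> NCQ_space" using f PhiS GSP_packed unfolding NCQ_space_def space_def by auto
  qed
  show "inj_on (Phi :: (nat list \<Rightarrow> 'k) \<Rightarrow> _) STdual_space"
    by (rule inj_onI) (simp add: PhiS)
  fix f g :: "nat list \<Rightarrow> 'k"
  assume f: "f \<in> STdual_space" and g: "g \<in> STdual_space"
  have f': "f \<in> space GSP" and g': "g \<in> space GSP" using f g unfolding STdual_space_def by auto
  show "Phi (STdual_mult f g) = NCQ_mult (Phi f) (Phi g)"
    using Phi_id[OF mult_fin[OF f' g']] mult_eq[OF f' g'] PhiS f g by simp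
next
  have "supp (delta [] :: nat list \<Rightarrow> 'k) \<subseteq> {[]}" unfolding supp_def delta_def by auto
  then have "finite (supp (delta [] :: nat list \<Rightarrow> 'k))" using finite_subset by blast
  then show "Phi (STdual_unit :: nat list \<Rightarrow> 'k) = NCQ_unit"
    unfolding STdual_unit_def NCQ_unit_def by (rule Phi_id)
next
  fix f :: "nat list \<Rightarrow> 'k"
  assume f: "f \<in> STdual_space"
  have f': "f \<in> space GSP" using f unfolding STdual_space_def by auto
  have pf: "Phi f = f" using Phi_id spaceD[OF f'] by blast
  show "NCQ_comult (Phi f) = Phi2 (STdual_comult f)"
    using Phi2_id[OF comult_fin[OF f']] comult_eq[OF f'] pf by simp
next
  fix f :: "nat list \<Rightarrow> 'k"
  assume f: "f \<in> STdual_space"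
  have f': "f \<in> space GSP" using f unfolding STdual_space_def by auto
  have pf: "Phi f = f" using Phi_id spaceD[OF f'] by blast
  show "NCQ_counit (Phi f) = STdual_counit f"
    unfolding pf NCQ_counit_def STdual_counit_def ..
qed

end
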